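(* Consider the production planning setting described in the context, in the non-overlapping case, with the discrete budgeted scenario set $\mathcal{U}^d$ (budget $\Gamma^d\in\{0,1,\dots,T\}$). Fix a production plan $\pmb{x}\in\mathbb{X}$ with cumulative productions $X_t=\sum_{i\in[t]}x_i$. Then the optimal value of the adversarial problem $\max_{\pmb{D}\in\mathcal{U}^d}\sum_{t\in[T]}\max\{f_I(X_t,D_t),f_B(X_t,D_t)\}$ equals the optimal value of $$\max\ \sum_{t\in[T]}\max\{f_I(X_t,\widehat{D}_t-\delta_t\Delta_t),\,f_B(X_t,\widehat{D}_t+\delta_t\Delta_t)\}\quad\text{s.t.}\quad \sum_{t\in[T]}\delta_t\le\Gamma^d,\ \ 0\le\delta_t\le 1\ (t\in[T]).$$ Moreover, this latter problem has an integral optimal solution $\pmb{\delta}^*\in\{0,1\}^T$ with $\sum_{t\in[T]}\delta^*_t=\Gamma^d$.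
   Context: There are $T\ge 1$ periods, $[T]=\{1,\dots,T\}$. Given are a production cost $c^P$, an inventory cost $c^I$, a backordering cost $c^B$ and a selling price $b^P$ (independent of the period), and a set $\mathbb{X}\subseteq\mathbb{R}^T_+$ of feasible production plans $\pmb{x}=(x_1,\dots,x_T)$ described by finitely many linear constraints. For a plan write $X_t=\sum_{i\in[t]}x_i$. For $t\in[T-1]$ let $f_I(X_t,D_t)=c^I(X_t-D_t)$ and $f_B(X_t,D_t)=c^B(D_t-X_t)$; for $t=T$ let $f_I(X_T,D_T)=c^I(X_T-D_T)+c^PX_T-b^PD_T$ and $f_B(X_T,D_T)=c^B(D_T-X_T)+c^PX_T-b^PX_T$. Nominal cumulative demands $\widehat{D}_t\ge 0$ satisfy $\widehat{D}_t\le\widehat{D}_{t+1}$, and deviations satisfy $0\le\Delta_t\le\widehat{D}_t$. The discrete budgeted scenario set is $\mathcal{U}^d=\{\pmb{D}\in\mathbb{R}^T: D_t\le D_{t+1}\ (t\in[T-1]),\ D_t\in[\widehat{D}_t-\Delta_t,\widehat{D}_t+\Delta_t]\ (t\in[T]),\ |\{t: D_t\ne\widehat{D}_t\}|\le\Gamma^d\}$ with integer $\Gamma^d\in\{0,\dots,T\}$. The non-overlapping case means $\widehat{D}_t+\Delta_t\le\widehat{D}_{t+1}-\Delta_{t+1}$ for all $t\in[T-1]$. *)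

theory Defs
  imports Complex_Main
begin

text \<open>Vectors indexed by periods 1..T are functions nat => real; values outside 1..T are irrelevant.\<close>

definition cumul :: "(nat \<Rightarrow> real) \<Rightarrow> nat \<Rightarrow> real" where
  "cumul x t = (\<Sum>i=1..t. x i)"

definition fI :: "nat \<Rightarrow> real \<Rightarrow> real \<Rightarrow> real \<Rightarrow> nat \<Rightarrow> real \<Rightarrow> real \<Rightarrow> real" where
  "fI T cP cI bP t X D =
     (if t < T then cI * (X - D) else cI * (X - D) + cP * X - bP * D)"

definition fB :: "nat \<Rightarrow> real \<Rightarrow> real \<Rightarrow> real \<Rightarrow> nat \<Rightarrow> real \<Rightarrow> real \<Rightarrow> real" where
  "fB T cP cB bP t X D =
     (if t < T then cB * (D - X) else cB * (D - X) + cP * X - bP * X)"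

definition Ud :: "nat \<Rightarrow> (nat \<Rightarrow> real) \<Rightarrow> (nat \<Rightarrow> real) \<Rightarrow> nat \<Rightarrow> (nat \<Rightarrow> real) set" where
  "Ud T Dhat Delta Gamma =
     {D. (\<forall>t\<in>{1..<T}. D t \<le> D (t+1)) \<and>
         (\<forall>t\<in>{1..T}. Dhat t - Delta t \<le> D t \<and> D t \<le> Dhat t + Delta t) \<and>
         card {t\<in>{1..T}. D t \<noteq> Dhat t} \<le> Gamma}"

definition DeltaSet :: "nat \<Rightarrow> nat \<Rightarrow> (nat \<Rightarrow> real) set" where
  "DeltaSet T Gamma =
     {\<delta>. (\<Sum>t=1..T. \<delta> t) \<le> real Gamma \<and> (\<forall>t\<in>{1..T}. 0 \<le> \<delta> t \<and> \<delta> t \<le> 1)}"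

definition is_opt_value :: "'a set \<Rightarrow> ('a \<Rightarrow> real) \<Rightarrow> real \<Rightarrow> bool" where
  "is_opt_value S f v \<longleftrightarrow> (\<exists>s\<in>S. f s = v) \<and> (\<forall>s\<in>S. f s \<le> v)"

end

theory Submission
  imports Defs
begin

lemma fI_anti: "cI \<ge> 0 \<Longrightarrow> bP \<ge> 0 \<Longrightarrow> D \<le> D' \<Longrightarrow> fI T cP cI bP t X D' \<le> fI T cP cI bP t X D"
proof -
  assume a: "cI \<ge> 0" "bP \<ge> 0" "D \<le> D'"
  have "cI * (X - D') \<le> cI * (X - D)" "bP * D \<le> bP * D'" using a by (auto intro!: mult_left_mono)
  then show ?thesis unfolding fI_def by auto
qed

lemma fB_mono: "cB \<ge> 0 \<Longrightarrow> D \<le> D' \<Longrightarrow> fB T cP cB bP t X D \<le> fB T cP cB bP t X D'"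
  unfolding fB_def by (auto intro!: add_mono mult_left_mono)

lemma fI_aff: "fI T cP cI bP t X (H - d*E) = fI T cP cI bP t X H + d * (fI T cP cI bP t X (H - E) - fI T cP cI bP t X H)"
  unfolding fI_def by (simp add: algebra_simps)

lemma fB_aff: "fB T cP cB bP t X (H + d*E) = fB T cP cB bP t X H + d * (fB T cP cB bP t X (H + E) - fB T cP cB bP t X H)"
  unfolding fB_def by (simp add: algebra_simps)

lemma max_conv:
  fixes u0 u1 w0 w1 d :: real
  assumes "0 \<le> d" "d \<le> 1"
  shows "max (u0 + d*(u1-u0)) (w0 + d*(w1-w0)) \<le> max u0 w0 + d*(max u1 w1 - max u0 w0)"
proof -
  have e1: "u0 + d*(u1-u0) = (1-d)*u0 + d*u1" "w0 + d*(w1-w0) = (1-d)*w0 + d*w1"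
    "max u0 w0 + d*(max u1 w1 - max u0 w0) = (1-d)*max u0 w0 + d*max u1 w1"
    by (simp_all add: algebra_simps)
  have "(1-d)*u0 \<le> (1-d)*max u0 w0" "(1-d)*w0 \<le> (1-d)*max u0 w0"
    "d*u1 \<le> d*max u1 w1" "d*w1 \<le> d*max u1 w1"
    using assms by (auto intro!: mult_left_mono)
  then show ?thesis unfolding e1 by simp
qed

lemma knap:
  fixes a :: "nat \<Rightarrow> real"
  assumes fin: "finite I" and k: "k \<le> card I" and apos: "\<forall>t\<in>I. a t \<ge> 0"
  shows "\<exists>S\<subseteq>I. card S = k \<and> (\<forall>\<delta>. (\<forall>t\<in>I. 0 \<le> \<delta> t \<and> \<delta> t \<le> 1) \<and> sum \<delta> I \<le> real k
            \<longrightarrow> (\<Sum>t\<in>I. \<delta> t * a t) \<le> sum a S)"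
proof -
  define F where "F = {S. S \<subseteq> I \<and> card S = k}"
  have finF: "finite F" unfolding F_def using fin by auto
  obtain S0 where "S0 \<subseteq> I" "card S0 = k" using obtain_subset_with_card_n[OF k] by metis
  hence neF: "F \<noteq> {}" unfolding F_def by auto
  define M where "M = Max ((\<lambda>S. sum a S) ` F)"
  have "M \<in> (\<lambda>S. sum a S) ` F" unfolding M_def using finF neF by (intro Max_in) auto
  then obtain S where SF: "S \<in> F" and SM: "sum a S = M" by auto
  have Smax: "\<And>S'. S' \<in> F \<Longrightarrow> sum a S' \<le> sum a S" unfolding SM M_def using finF by auto
  have SI: "S \<subseteq> I" and cS: "card S = k" using SF unfolding F_def by auto
  have finS: "finite S" using SI fin finite_subset by blast
  have exch: "a u \<le> a s" if s: "s \<in> S" and u: "u \<in> I - S" for s u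
  proof -
    let ?S' = "insert u (S - {s})"
    have k0: "k \<ge> 1" using cS s finS by (metis One_nat_def Suc_leI card_gt_0_iff empty_iff)
    have c1: "card (S - {s}) = k - 1" using cS s finS by simp
    have "u \<notin> S - {s}" using u by auto
    hence "card ?S' = k" using c1 k0 finS by simp
    moreover have "?S' \<subseteq> I" using SI u by auto
    ultimately have "?S' \<in> F" unfolding F_def by simp
    hence "sum a ?S' \<le> sum a S" by (rule Smax)
    moreover have "sum a ?S' = sum a S - a s + a u" using finS s u
      by (simp add: sum.insert sum_diff1)
    ultimately show ?thesis by simp
  qed
  show ?thesis
  proof (intro exI[of _ S] conjI SI cS allI impI)
    fix \<delta> :: "nat \<Rightarrow> real"
    assume d: "(\<forall>t\<in>I. 0 \<le> \<delta> t \<and> \<delta> t \<le> 1) \<and> sum \<delta> I \<le> real k"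
    show "(\<Sum>t\<in>I. \<delta> t * a t) \<le> sum a S"
    proof (cases "S = {}")
      case True
      hence "k = 0" using cS by auto
      have nn: "\<forall>t\<in>I. 0 \<le> \<delta> t" using d by auto
      have "sum \<delta> I \<le> 0" using d \<open>k = 0\<close> by simp
      moreover have "sum \<delta> I \<ge> 0" using nn by (intro sum_nonneg) auto
      ultimately have "sum \<delta> I = 0" by linarith
      hence "\<forall>t\<in>I. \<delta> t = 0" using fin nn sum_nonneg_eq_0_iff[of I \<delta>] by auto
      then show ?thesis using True by simp
    next
      case False
      define th where "th = Min (a ` S)"
      have th_le: "\<And>s. s \<in> S \<Longrightarrow> th \<le> a s" unfolding th_def using finS by auto
      have th_in: "th \<in> a ` S" unfolding th_def using finS False by (intro Min_in) auto
      have th_ge: "\<And>u. u \<in> I - S \<Longrightarrow> a u \<le> th" using th_in exch by auto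
      have th0: "th \<ge> 0" using th_in apos SI by auto
      have "(\<Sum>t\<in>I. \<delta> t * a t) = (\<Sum>t\<in>I. \<delta> t * (a t - th)) + th * sum \<delta> I"
      proof -
        have "(\<Sum>t\<in>I. \<delta> t * a t) = (\<Sum>t\<in>I. \<delta> t * (a t - th) + th * \<delta> t)"
          by (intro sum.cong) (auto simp: algebra_simps)
        also have "\<dots> = (\<Sum>t\<in>I. \<delta> t * (a t - th)) + th * sum \<delta> I"
          by (simp only: sum.distrib sum_distrib_left)
        finally show ?thesis .
      qed
      also have "th * sum \<delta> I \<le> th * real k" using d th0 by (intro mult_left_mono) auto
      also have "(\<Sum>t\<in>I. \<delta> t * (a t - th)) = (\<Sum>t\<in>S. \<delta> t * (a t - th)) + (\<Sum>t\<in>I-S. \<delta> t * (a t - th))"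
        using sum.subset_diff[OF SI fin, of "\<lambda>t. \<delta> t * (a t - th)"] by (simp only: add.commute)
      also have "(\<Sum>t\<in>I-S. \<delta> t * (a t - th)) \<le> 0"
        using d th_ge by (intro sum_nonpos) (auto intro: mult_nonneg_nonpos)
      also have "(\<Sum>t\<in>S. \<delta> t * (a t - th)) \<le> (\<Sum>t\<in>S. (a t - th))"
      proof (rule sum_mono)
        fix t assume "t \<in> S"
        then have "0 \<le> a t - th" "\<delta> t \<le> 1" using th_le d SI by auto
        then have "0 \<le> (1 - \<delta> t) * (a t - th)" by simp
        then show "\<delta> t * (a t - th) \<le> a t - th" by (simp add: algebra_simps)
      qed
      also have "(\<Sum>t\<in>S. (a t - th)) = sum a S - th * real k"
        using cS by (simp add: sum_subtractf)
      finally show ?thesis by simp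
    qed
  qed
qed


theorem lemma1:
  fixes T :: nat and Gamma :: nat and m :: nat
    and cP cI cB bP :: real
    and A :: "nat \<Rightarrow> nat \<Rightarrow> real" and b :: "nat \<Rightarrow> real"
    and Dhat Delta x :: "nat \<Rightarrow> real"
  assumes T_pos: "T \<ge> 1"
    and Gamma_le: "Gamma \<le> T"
    and costs: "cP \<ge> 0" "cI \<ge> 0" "cB \<ge> 0" "bP \<ge> 0"
    and Dhat_nonneg: "\<forall>t\<in>{1..T}. Dhat t \<ge> 0"
    and Dhat_mono: "\<forall>t\<in>{1..<T}. Dhat t \<le> Dhat (t+1)"
    and Delta_bounds: "\<forall>t\<in>{1..T}. 0 \<le> Delta t \<and> Delta t \<le> Dhat t"
    and nonoverlap: "\<forall>t\<in>{1..<T}. Dhat t + Delta t \<le> Dhat (t+1) - Delta (t+1)"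
    and x_in_X: "x \<in> {y. (\<forall>t\<in>{1..T}. y t \<ge> 0) \<and>
                          (\<forall>j<m. (\<Sum>t=1..T. A j t * y t) \<le> b j)}"
  shows "\<exists>v.
     is_opt_value (Ud T Dhat Delta Gamma)
       (\<lambda>D. \<Sum>t=1..T. max (fI T cP cI bP t (cumul x t) (D t))
                           (fB T cP cB bP t (cumul x t) (D t))) v
   \<and> is_opt_value (DeltaSet T Gamma)
       (\<lambda>\<delta>. \<Sum>t=1..T. max (fI T cP cI bP t (cumul x t) (Dhat t - \<delta> t * Delta t))
                           (fB T cP cB bP t (cumul x t) (Dhat t + \<delta> t * Delta t))) v
   \<and> (\<exists>\<delta>\<in>DeltaSet T Gamma. (\<forall>t\<in>{1..T}. \<delta> t \<in> {0, 1}) \<and>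
         (\<Sum>t=1..T. \<delta> t) = real Gamma \<and>
         (\<Sum>t=1..T. max (fI T cP cI bP t (cumul x t) (Dhat t - \<delta> t * Delta t))
                       (fB T cP cB bP t (cumul x t) (Dhat t + \<delta> t * Delta t))) = v)"
proof -
  let ?I = "{1..T}"
  let ?X = "\<lambda>t. cumul x t"
  define h where "h t d = max (fI T cP cI bP t (?X t) (Dhat t - d * Delta t))
                           (fB T cP cB bP t (?X t) (Dhat t + d * Delta t))" for t d
  define g where "g t D = max (fI T cP cI bP t (?X t) D) (fB T cP cB bP t (?X t) D)" for t D
  define a where "a t = h t 1 - h t 0" for t
  have fin: "finite ?I" by simp
  have apos: "\<forall>t\<in>?I. a t \<ge> 0"
  proof
    fix t assume t: "t \<in> ?I"
    have "fI T cP cI bP t (?X t) (Dhat t) \<le> fI T cP cI bP t (?X t) (Dhat t - Delta t)"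
      using costs Delta_bounds t by (intro fI_anti) auto
    moreover have "fB T cP cB bP t (?X t) (Dhat t) \<le> fB T cP cB bP t (?X t) (Dhat t + Delta t)"
      using costs Delta_bounds t by (intro fB_mono) auto
    ultimately show "a t \<ge> 0" unfolding a_def h_def by auto
  qed
  have hconv: "h t d \<le> h t 0 + d * a t" if "0 \<le> d" "d \<le> 1" for t d
    unfolding h_def a_def
    apply (subst fI_aff, subst fB_aff)
    using max_conv[OF that] by simp
  obtain S where SI: "S \<subseteq> ?I" and cS: "card S = Gamma" and
    Sk: "\<And>\<delta>. (\<forall>t\<in>?I. 0 \<le> \<delta> t \<and> \<delta> t \<le> 1) \<and> sum \<delta> ?I \<le> real Gamma
            \<Longrightarrow> (\<Sum>t\<in>?I. \<delta> t * a t) \<le> sum a S"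
    using knap[OF fin _ apos, of Gamma] Gamma_le by auto
  define dS where "dS t = (if t \<in> S then 1 else 0 :: real)" for t
  define v where "v = (\<Sum>t\<in>?I. h t (dS t))"
  have v_eq: "v = (\<Sum>t\<in>?I. h t 0) + sum a S"
  proof -
    have v1: "v = (\<Sum>t\<in>?I. h t 0 + dS t * a t)"
      unfolding v_def by (intro sum.cong) (auto simp: dS_def a_def)
    have "(\<Sum>t\<in>?I. dS t * a t) = (\<Sum>t\<in>?I. if t \<in> S then a t else 0)"
      by (intro sum.cong) (auto simp: dS_def)
    also have "\<dots> = sum a (?I \<inter> S)" by (simp add: sum.inter_restrict)
    also have "?I \<inter> S = S" using SI by auto
    finally show ?thesis using v1 by (simp add: sum.distrib)
  qed
  have sumdS: "sum dS ?I = real Gamma"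
    using SI cS by (simp add: dS_def sum.If_cases Int_absorb1)
  have dS_in: "dS \<in> DeltaSet T Gamma" unfolding DeltaSet_def using sumdS by (auto simp: dS_def)
  have relax_le: "(\<Sum>t\<in>?I. h t (\<delta> t)) \<le> v" if d: "\<delta> \<in> DeltaSet T Gamma" for \<delta>
  proof -
    have d': "(\<forall>t\<in>?I. 0 \<le> \<delta> t \<and> \<delta> t \<le> 1)" "sum \<delta> ?I \<le> real Gamma"
      using d unfolding DeltaSet_def by auto
    have "(\<Sum>t\<in>?I. h t (\<delta> t)) \<le> (\<Sum>t\<in>?I. h t 0 + \<delta> t * a t)"
      using d' by (intro sum_mono hconv) auto
    also have "\<dots> = (\<Sum>t\<in>?I. h t 0) + (\<Sum>t\<in>?I. \<delta> t * a t)" by (simp add: sum.distrib)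
    also have "\<dots> \<le> v" unfolding v_eq using Sk d' by auto
    finally show ?thesis .
  qed
  have Ud_le: "(\<Sum>t\<in>?I. g t (D t)) \<le> v" if D: "D \<in> Ud T Dhat Delta Gamma" for D
  proof -
    define N where "N = {t\<in>?I. D t \<noteq> Dhat t}"
    define dN where "dN t = (if t \<in> N then 1 else 0 :: real)" for t
    have NI: "N \<subseteq> ?I" unfolding N_def by auto
    have cN: "card N \<le> Gamma" using D unfolding Ud_def N_def by auto
    have "sum dN ?I = real (card N)"
      using NI by (simp add: dN_def sum.If_cases Int_absorb1)
    hence "dN \<in> DeltaSet T Gamma" unfolding DeltaSet_def using cN by (auto simp: dN_def)
    hence "(\<Sum>t\<in>?I. h t (dN t)) \<le> v" by (rule relax_le)
    moreover have "(\<Sum>t\<in>?I. g t (D t)) \<le> (\<Sum>t\<in>?I. h t (dN t))"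
    proof (rule sum_mono)
      fix t assume t: "t \<in> ?I"
      show "g t (D t) \<le> h t (dN t)"
      proof (cases "t \<in> N")
        case False
        then have "D t = Dhat t" using t unfolding N_def by auto
        then show ?thesis using False unfolding g_def h_def dN_def by simp
      next
        case True
        have b: "Dhat t - Delta t \<le> D t" "D t \<le> Dhat t + Delta t" using D t unfolding Ud_def by auto
        have "fI T cP cI bP t (?X t) (D t) \<le> fI T cP cI bP t (?X t) (Dhat t - Delta t)"
          using costs b by (intro fI_anti) auto
        moreover have "fB T cP cB bP t (?X t) (D t) \<le> fB T cP cB bP t (?X t) (Dhat t + Delta t)"
          using costs b by (intro fB_mono) auto
        ultimately show ?thesis using True unfolding g_def h_def dN_def by auto
      qed
    qed
    ultimately show ?thesis by simp
  qed
  define Ds where "Ds t = (if t \<in> S then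
      (if fI T cP cI bP t (?X t) (Dhat t - Delta t) \<ge> fB T cP cB bP t (?X t) (Dhat t + Delta t)
       then Dhat t - Delta t else Dhat t + Delta t) else Dhat t)" for t
  have Ds_g: "g t (Ds t) = h t (dS t)" if t: "t \<in> ?I" for t
  proof (cases "t \<in> S")
    case False then show ?thesis unfolding g_def h_def Ds_def dS_def by simp
  next
    case True
    have "fI T cP cI bP t (?X t) (Dhat t + Delta t) \<le> fI T cP cI bP t (?X t) (Dhat t - Delta t)"
      using costs Delta_bounds t by (intro fI_anti) auto
    moreover have "fB T cP cB bP t (?X t) (Dhat t - Delta t) \<le> fB T cP cB bP t (?X t) (Dhat t + Delta t)"
      using costs Delta_bounds t by (intro fB_mono) auto
    ultimately show ?thesis using True unfolding g_def h_def Ds_def dS_def by auto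
  qed
  have Ds_bd: "Dhat t - Delta t \<le> Ds t \<and> Ds t \<le> Dhat t + Delta t" if "t \<in> ?I" for t
    using Delta_bounds that unfolding Ds_def by auto
  have Ds_in: "Ds \<in> Ud T Dhat Delta Gamma"
    unfolding Ud_def
  proof (intro CollectI conjI ballI)
    fix t assume t: "t \<in> {1..<T}"
    have "Ds t \<le> Dhat t + Delta t" "Dhat (t+1) - Delta (t+1) \<le> Ds (t+1)"
      using Ds_bd t by auto
    then show "Ds t \<le> Ds (t+1)" using nonoverlap t by fastforce
  next
    fix t assume "t \<in> ?I" then show "Dhat t - Delta t \<le> Ds t" "Ds t \<le> Dhat t + Delta t"
      using Ds_bd by auto
  next
    have "{t\<in>?I. Ds t \<noteq> Dhat t} \<subseteq> S" unfolding Ds_def by auto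
    then have "card {t\<in>?I. Ds t \<noteq> Dhat t} \<le> card S"
      using SI by (intro card_mono) (auto intro: finite_subset)
    then show "card {t\<in>?I. Ds t \<noteq> Dhat t} \<le> Gamma" using cS by simp
  qed
  have Ds_val: "(\<Sum>t\<in>?I. g t (Ds t)) = v" unfolding v_def using Ds_g by (intro sum.cong) auto
  show ?thesis
  proof (intro exI[of _ v] conjI)
    show "is_opt_value (Ud T Dhat Delta Gamma)
       (\<lambda>D. \<Sum>t=1..T. max (fI T cP cI bP t (cumul x t) (D t))
                           (fB T cP cB bP t (cumul x t) (D t))) v"
      unfolding is_opt_value_def using Ds_in Ds_val Ud_le unfolding g_def by blast
    show "is_opt_value (DeltaSet T Gamma)
       (\<lambda>\<delta>. \<Sum>t=1..T. max (fI T cP cI bP t (cumul x t) (Dhat t - \<delta> t * Delta t))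
                           (fB T cP cB bP t (cumul x t) (Dhat t + \<delta> t * Delta t))) v"
      unfolding is_opt_value_def using dS_in relax_le unfolding v_def h_def by blast
    show "\<exists>\<delta>\<in>DeltaSet T Gamma. (\<forall>t\<in>{1..T}. \<delta> t \<in> {0, 1}) \<and>
         (\<Sum>t=1..T. \<delta> t) = real Gamma \<and>
         (\<Sum>t=1..T. max (fI T cP cI bP t (cumul x t) (Dhat t - \<delta> t * Delta t))
                       (fB T cP cB bP t (cumul x t) (Dhat t + \<delta> t * Delta t))) = v"
      using dS_in sumdS unfolding v_def h_def by (intro bexI[of _ dS]) (auto simp: dS_def)
  qed
qed

thm_deps lemma1

end
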